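(* Let $C\ge 1$ and $D\ge 0$ be integers and let $L=\{1,\dots,C\}$ be a set of labels. Let $(p_s)_{s=1}^C$ be a probability distribution on $L$ with all $p_s>0$. For each $s\in L$ let $q_s$ be a probability distribution on $\{0,1,\dots,D\}$. Let $c_{sr}\ge 0$ ($s,r\in L$) be given with $\sum_{k=1}^C p_k c_{sk}>0$ for every $s$, and set $$z_{sr}=\frac{p_r c_{sr}}{\sum_{k=1}^C p_k c_{sk}}\qquad (s,r\in L),$$ so that each $(z_{s1},\dots,z_{sC})$ is a probability vector. Consider the random pair $(\ell,\mathcal{M})$ generated as follows: $\ell\in L$ has $P(\ell=s)=p_s$; conditionally on $\ell=s$, a degree $d\in\{0,\dots,D\}$ is drawn with probability $q_s(d)$, and then $d$ neighbor labels are drawn independently, each equal to $r$ with probability $z_{sr}$; $\mathcal{M}$ is the resulting unordered multiset of neighbor labels, equivalently the count vector $(n_1,\dots,n_C)$ with $n_k$ the number of neighbor labels equal to $k$ (so $\sum_k n_k=d$). Thus $$P(\mathcal{M}=(n_1,\dots,n_C)\mid \ell=s)=q_s(d)\,\frac{d!}{\prod_{k=1}^C n_k!}\prod_{k=1}^C z_{sk}^{n_k},\qquad d=\textstyle\sum_k n_k.$$ (This is the model of a labelled random graph in which a node with label $r$ connects to a node with label $s$ with probability $c_{sr}$, nodes with label $s$ have degree distribution $q_s$, and the number of nodes is much larger than the maximum degree $D$, so that neighbor labels of a node with label $s$ are i.i.d. with law $z_{s\cdot}$.) Then the mutual information (in nats) between $\ell$ and $\mathcal{M}$ satisfies $$MI(\ell;\mathcal{M})\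 \ge\ NIC:=-\sum_{s=1}^C p_s\ln\!\left(\sum_{r=1}^C p_r\sum_{d=0}^{D}\sqrt{q_s(d)q_r(d)}\Big(\sum_{k=1}^C\sqrt{z_{sk}z_{rk}}\Big)^{d}\right).$$
   Context: $MI(X;Y)=H(Y)-H(Y\mid X)$ with natural logarithms. The quantity $NIC$ is called the Neighborhood Information Content; $p_s$ is the probability a node has label $s$, $c_{sr}$ the probability a node of label $r$ connects to a node of label $s$, $q_s$ the degree distribution of nodes with label $s$, and $z_{sr}$ equals the probability that a neighbor of a label-$s$ node has label $r$. *)

theory Defs
  imports Complex_Main "HOL-Library.Multiset"
begin

definition zz :: "nat \<Rightarrow> (nat \<Rightarrow> real) \<Rightarrow> (nat \<Rightarrow> nat \<Rightarrow> real) \<Rightarrow> nat \<Rightarrow> nat \<Rightarrow> real" where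
  "zz C p c s r = p r * c s r / (\<Sum>k\<in>{1..C}. p k * c s k)"

definition nbhds :: "nat \<Rightarrow> nat \<Rightarrow> nat multiset set" where
  "nbhds C D = {M. set_mset M \<subseteq> {1..C} \<and> size M \<le> D}"

definition condP :: "nat \<Rightarrow> (nat \<Rightarrow> real) \<Rightarrow> (nat \<Rightarrow> nat \<Rightarrow> real) \<Rightarrow> (nat \<Rightarrow> nat \<Rightarrow> real)
    \<Rightarrow> nat \<Rightarrow> nat multiset \<Rightarrow> real" where
  "condP C p q c s M = q s (size M) * (fact (size M) / (\<Prod>k\<in>{1..C}. fact (count M k)))
      * (\<Prod>k\<in>{1..C}. zz C p c s k ^ count M k)"

definition margP :: "nat \<Rightarrow> (nat \<Rightarrow> real) \<Rightarrow> (nat \<Rightarrow> nat \<Rightarrow> real) \<Rightarrow> (nat \<Rightarrow> nat \<Rightarrow> real)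
    \<Rightarrow> nat multiset \<Rightarrow> real" where
  "margP C p q c M = (\<Sum>s\<in>{1..C}. p s * condP C p q c s M)"

definition xlnx :: "real \<Rightarrow> real" where
  "xlnx x = (if x = 0 then 0 else x * ln x)"

text \<open>MI(l;M) = H(M) - H(M | l), natural logarithms.\<close>
definition MI :: "nat \<Rightarrow> nat \<Rightarrow> (nat \<Rightarrow> real) \<Rightarrow> (nat \<Rightarrow> nat \<Rightarrow> real) \<Rightarrow> (nat \<Rightarrow> nat \<Rightarrow> real) \<Rightarrow> real" where
  "MI C D p q c =
     (- (\<Sum>M\<in>nbhds C D. xlnx (margP C p q c M)))
     - (- (\<Sum>s\<in>{1..C}. p s * (\<Sum>M\<in>nbhds C D. xlnx (condP C p q c s M))))"

definition NIC :: "nat \<Rightarrow> nat \<Rightarrow> (nat \<Rightarrow> real) \<Rightarrow> (nat \<Rightarrow> nat \<Rightarrow> real) \<Rightarrow> (nat \<Rightarrow> nat \<Rightarrow> real) \<Rightarrow> real" where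
  "NIC C D p q c = - (\<Sum>s\<in>{1..C}. p s * ln (\<Sum>r\<in>{1..C}. p r *
      (\<Sum>d\<in>{0..D}. sqrt (q s d * q r d) *
         (\<Sum>k\<in>{1..C}. sqrt (zz C p c s k * zz C p c r k)) ^ d)))"

end

theory Submission imports Defs "HOL-Combinatorics.Multiset_Permutations" begin
lemma lists_power:
  fixes a :: "'a \<Rightarrow> real" assumes "finite K"
  shows "(\<Sum>k\<in>K. a k)^d = (\<Sum>xs\<in>{xs. set xs \<subseteq> K \<and> length xs = d}. prod_list (map a xs))"
proof (induction d)
  case 0
  have "{xs. set xs \<subseteq> K \<and> length xs = 0} = {[]}" by auto
  then show ?case by simp
next
  case (Suc d)
  let ?L = "\<lambda>d. {xs. set xs \<subseteq> K \<and> length xs = d}"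
  have eq: "?L (Suc d) = (\<lambda>(x,ys). x#ys) ` (K \<times> ?L d)"
  proof
    show "?L (Suc d) \<subseteq> (\<lambda>(x,ys). x#ys) ` (K \<times> ?L d)"
    proof
      fix xs assume "xs \<in> ?L (Suc d)"
      then obtain y ys where "xs = y # ys" "y \<in> K" "ys \<in> ?L d"
        by (cases xs) auto
      then show "xs \<in> (\<lambda>(x,ys). x#ys) ` (K \<times> ?L d)" by force
    qed
  qed auto
  have inj: "inj_on (\<lambda>(x,ys). x#ys) (K \<times> ?L d)" by (auto simp: inj_on_def)
  have "(\<Sum>k\<in>K. a k)^Suc d = (\<Sum>k\<in>K. a k) * (\<Sum>ys\<in>?L d. prod_list (map a ys))"
    using Suc by simp
  also have "\<dots> = (\<Sum>k\<in>K. \<Sum>ys\<in>?L d. a k * prod_list (map a ys))"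
    by (simp add: sum_product)
  also have "\<dots> = (\<Sum>(k,ys)\<in>K \<times> ?L d. a k * prod_list (map a ys))"
    by (simp add: sum.cartesian_product)
  also have "\<dots> = (\<Sum>xs\<in>?L (Suc d). prod_list (map a xs))"
    unfolding eq by (subst sum.reindex[OF inj]) (auto intro!: sum.cong)
  finally show ?case .
qed

lemma card_perm_real:
  assumes "finite K" "set_mset M \<subseteq> K"
  shows "real (card (permutations_of_multiset M)) = fact (size M) / (\<Prod>k\<in>K. fact (count M k))"
proof -
  have "(\<Prod>k\<in>K. fact (count M k) :: nat) = (\<Prod>k\<in>set_mset M. fact (count M k))"
    using assms by (intro prod.mono_neutral_right) (auto simp: not_in_iff)
  then have "card (permutations_of_multiset M) * (\<Prod>k\<in>K. fact (count M k) :: nat) = fact (size M)"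
    using card_permutations_of_multiset_aux[of M] by simp
  then have "real (card (permutations_of_multiset M)) * (\<Prod>k\<in>K. fact (count M k)) = fact (size M)"
    by (metis (mono_tags, lifting) of_nat_fact of_nat_mult of_nat_prod prod.cong)
  moreover have "(\<Prod>k\<in>K. fact (count M k) :: real) \<noteq> 0" using assms(1) by (auto simp: prod_zero_iff)
  ultimately show ?thesis by (simp add: field_simps)
qed

lemma multinomial:
  fixes a :: "'a \<Rightarrow> real" assumes "finite K"
  shows "(\<Sum>M\<in>{M. set_mset M \<subseteq> K \<and> size M = d}.
            fact (size M) / (\<Prod>k\<in>K. fact (count M k)) * (\<Prod>k\<in>K. a k ^ count M k))
         = (\<Sum>k\<in>K. a k)^d"
proof -
  let ?L = "{xs. set xs \<subseteq> K \<and> length xs = d}"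
  let ?S = "{M. set_mset M \<subseteq> K \<and> size M = d}"
  have finL: "finite ?L" using assms by (rule finite_lists_length_eq)
  have Seq: "?S = mset ` ?L"
  proof
    show "?S \<subseteq> mset ` ?L"
    proof
      fix M assume "M \<in> ?S"
      moreover obtain xs where "mset xs = M" using ex_mset by blast
      ultimately show "M \<in> mset ` ?L" by force
    qed
  qed auto
  have finS: "finite ?S" using Seq finL by simp
  have "(\<Sum>k\<in>K. a k)^d = (\<Sum>xs\<in>?L. prod_list (map a xs))" using lists_power[OF assms] .
  also have "\<dots> = (\<Sum>M\<in>?S. \<Sum>xs\<in>{xs\<in>?L. mset xs = M}. prod_list (map a xs))"
    by (rule sum.group[symmetric]) (use finL finS Seq in auto)
  also have "\<dots> = (\<Sum>M\<in>?S. fact (size M) / (\<Prod>k\<in>K. fact (count M k)) * (\<Prod>k\<in>K. a k ^ count M k))"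
  proof (rule sum.cong[OF refl])
    fix M assume M: "M \<in> ?S"
    have pe: "{xs\<in>?L. mset xs = M} = permutations_of_multiset M"
      using M by (auto simp: permutations_of_multiset_def)
    have pv: "prod_list (map a xs) = (\<Prod>k\<in>K. a k ^ count M k)" if "mset xs = M" for xs
    proof -
      have "prod_list (map a xs) = prod_mset (image_mset a M)"
        using that by (metis mset_map prod_mset_prod_list)
      also have "\<dots> = (\<Prod>k\<in>set_mset M. a k ^ count M k)" by (rule image_prod_mset_multiplicity)
      also have "\<dots> = (\<Prod>k\<in>K. a k ^ count M k)"
        using M assms by (intro prod.mono_neutral_left) (auto simp: not_in_iff)
      finally show ?thesis .
    qed
    have "(\<Sum>xs\<in>{xs\<in>?L. mset xs = M}. prod_list (map a xs))
        = (\<Sum>xs\<in>permutations_of_multiset M. (\<Prod>k\<in>K. a k ^ count M k))"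
      unfolding pe by (rule sum.cong) (auto simp: pv permutations_of_multiset_def)
    also have "\<dots> = real (card (permutations_of_multiset M)) * (\<Prod>k\<in>K. a k ^ count M k)" by simp
    finally show "(\<Sum>xs\<in>{xs\<in>?L. mset xs = M}. prod_list (map a xs)) =
        fact (size M) / (\<Prod>k\<in>K. fact (count M k)) * (\<Prod>k\<in>K. a k ^ count M k)"
      using card_perm_real[OF assms] M by simp
  qed
  finally show ?thesis by simp
qed

lemma nbhds_split:
  assumes "finite K"
  shows "finite {M. set_mset M \<subseteq> K \<and> size M \<le> D}"
    "(\<Sum>M\<in>{M. set_mset M \<subseteq> K \<and> size M \<le> D}. g M)
       = (\<Sum>d\<in>{0..D}. \<Sum>M\<in>{M. set_mset M \<subseteq> K \<and> size M = d}. g M)"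
proof -
  let ?L = "{xs. set xs \<subseteq> K \<and> length xs \<le> D}"
  let ?N = "{M. set_mset M \<subseteq> K \<and> size M \<le> D}"
  have "?N \<subseteq> mset ` ?L"
  proof
    fix M assume "M \<in> ?N"
    moreover obtain xs where "mset xs = M" using ex_mset by blast
    ultimately show "M \<in> mset ` ?L" by force
  qed
  then show fin: "finite ?N" using finite_lists_length_le[OF assms] finite_subset by blast
  have "(\<Sum>M\<in>?N. g M) = (\<Sum>d\<in>{0..D}. \<Sum>M\<in>{M\<in>?N. size M = d}. g M)"
    by (rule sum.group[symmetric]) (use fin in auto)
  also have "\<dots> = (\<Sum>d\<in>{0..D}. \<Sum>M\<in>{M. set_mset M \<subseteq> K \<and> size M = d}. g M)"
    by (rule sum.cong[OF refl], rule sum.cong) auto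
  finally show "(\<Sum>M\<in>?N. g M) = (\<Sum>d\<in>{0..D}. \<Sum>M\<in>{M. set_mset M \<subseteq> K \<and> size M = d}. g M)" .
qed

lemma prod_sqrt: "sqrt (\<Prod>x\<in>A. f x) = (\<Prod>x\<in>A. sqrt (f x))"
  by (induction A rule: infinite_finite_induct) (auto simp: real_sqrt_mult)

theorem theorem1:
  fixes C D :: nat and p :: "nat \<Rightarrow> real" and q c :: "nat \<Rightarrow> nat \<Rightarrow> real"
  assumes "C \<ge> 1"
    and "\<And>s. s \<in> {1..C} \<Longrightarrow> p s > 0"
    and "(\<Sum>s\<in>{1..C}. p s) = 1"
    and "\<And>s d. s \<in> {1..C} \<Longrightarrow> d \<in> {0..D} \<Longrightarrow> q s d \<ge> 0"
    and "\<And>s. s \<in> {1..C} \<Longrightarrow> (\<Sum>d\<in>{0..D}. q s d) = 1"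
    and "\<And>s r. s \<in> {1..C} \<Longrightarrow> r \<in> {1..C} \<Longrightarrow> c s r \<ge> 0"
    and "\<And>s. s \<in> {1..C} \<Longrightarrow> (\<Sum>k\<in>{1..C}. p k * c s k) > 0"
  shows "MI C D p q c \<ge> NIC C D p q c"
proof -
  define K where "K = {1..C}"
  define N where "N = nbhds C D"
  define z where "z = zz C p c"
  define mult where "mult = (\<lambda>M. fact (size M) / (\<Prod>k\<in>K. fact (count M k)) :: real)"
  define P where "P = condP C p q c"
  define Pm where "Pm = margP C p q c"
  define f where "f = (\<lambda>M. \<Sum>r\<in>K. p r * sqrt (P r M))"
  define Z where "Z = (\<lambda>s. \<Sum>M\<in>N. sqrt (P s M) * f M)"
  have finK: "finite K" by (simp add: K_def)
  have pK: "\<And>s. s \<in> K \<Longrightarrow> p s > 0" using assms(2) K_def by blast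
  have NK: "N = {M. set_mset M \<subseteq> K \<and> size M \<le> D}" by (simp add: N_def nbhds_def K_def)
  have finN: "finite N" using nbhds_split(1)[OF finK] NK by simp
  have splitN: "\<And>g. (\<Sum>M\<in>N. g M) = (\<Sum>d\<in>{0..D}. \<Sum>M\<in>{M. set_mset M \<subseteq> K \<and> size M = d}. g M)"
    using nbhds_split(2)[OF finK] NK by simp
  have z_nn: "\<And>s k. s \<in> K \<Longrightarrow> k \<in> K \<Longrightarrow> z s k \<ge> 0"
  proof -
    fix s k assume s: "s \<in> K" and k: "k \<in> K"
    have "p k * c s k \<ge> 0" using assms(2,6) s k K_def by (simp add: less_imp_le)
    moreover have "(\<Sum>k\<in>{1..C}. p k * c s k) > 0" using assms(7) s K_def by blast
    ultimately show "z s k \<ge> 0" unfolding z_def zz_def by simp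
  qed
  have z_sum: "\<And>s. s \<in> K \<Longrightarrow> (\<Sum>k\<in>K. z s k) = 1"
  proof -
    fix s assume s: "s \<in> K"
    have "(\<Sum>k\<in>K. z s k) = (\<Sum>k\<in>K. p k * c s k) / (\<Sum>k\<in>{1..C}. p k * c s k)"
      unfolding z_def zz_def by (simp add: sum_divide_distrib)
    moreover have "(\<Sum>k\<in>{1..C}. p k * c s k) > 0" using assms(7) s K_def by blast
    ultimately show "(\<Sum>k\<in>K. z s k) = 1" unfolding K_def by simp
  qed
  have mult_nn: "\<And>M. mult M \<ge> 0" unfolding mult_def by (intro divide_nonneg_nonneg prod_nonneg) auto
  have P_eq: "\<And>s M. P s M = q s (size M) * mult M * (\<Prod>k\<in>K. z s k ^ count M k)"
    unfolding P_def condP_def mult_def z_def K_def by simp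
  have P_nn: "\<And>s M. s \<in> K \<Longrightarrow> M \<in> N \<Longrightarrow> P s M \<ge> 0"
  proof -
    fix s M assume s: "s \<in> K" and M: "M \<in> N"
    have "q s (size M) \<ge> 0" using assms(4) s M NK K_def by auto
    moreover have "(\<Prod>k\<in>K. z s k ^ count M k) \<ge> 0" using z_nn s by (auto intro!: prod_nonneg)
    ultimately show "P s M \<ge> 0" unfolding P_eq using mult_nn by simp
  qed
  have P_sum: "\<And>s. s \<in> K \<Longrightarrow> (\<Sum>M\<in>N. P s M) = 1"
  proof -
    fix s assume s: "s \<in> K"
    have "(\<Sum>M\<in>N. P s M) = (\<Sum>d\<in>{0..D}. \<Sum>M\<in>{M. set_mset M \<subseteq> K \<and> size M = d}.
             q s d * (mult M * (\<Prod>k\<in>K. z s k ^ count M k)))"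
      unfolding splitN by (intro sum.cong refl) (simp add: P_eq)
    also have "\<dots> = (\<Sum>d\<in>{0..D}. q s d * (\<Sum>k\<in>K. z s k) ^ d)"
      by (intro sum.cong refl) (simp only: sum_distrib_left[symmetric] mult_def multinomial[OF finK])
    also have "\<dots> = 1" using z_sum[OF s] assms(5) s K_def by simp
    finally show "(\<Sum>M\<in>N. P s M) = 1" .
  qed
  have Pm_eq: "\<And>M. Pm M = (\<Sum>s\<in>K. p s * P s M)" unfolding Pm_def margP_def P_def K_def by simp
  have f_ge: "\<And>s M. s \<in> K \<Longrightarrow> M \<in> N \<Longrightarrow> f M \<ge> p s * sqrt (P s M)"
  proof -
    fix s M assume s: "s \<in> K" and M: "M \<in> N"
    have "\<And>r. r \<in> K \<Longrightarrow> 0 \<le> p r * sqrt (P r M)"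
      using pK P_nn M by (meson less_imp_le mult_nonneg_nonneg real_sqrt_ge_zero)
    then show "f M \<ge> p s * sqrt (P s M)" unfolding f_def using finK s by (intro member_le_sum) auto
  qed
  have Pm_ge: "\<And>s M. s \<in> K \<Longrightarrow> M \<in> N \<Longrightarrow> Pm M \<ge> p s * P s M"
  proof -
    fix s M assume s: "s \<in> K" and M: "M \<in> N"
    have "\<And>r. r \<in> K \<Longrightarrow> 0 \<le> p r * P r M"
      using pK P_nn M by (meson less_imp_le mult_nonneg_nonneg)
    then show "Pm M \<ge> p s * P s M" unfolding Pm_eq using finK s by (intro member_le_sum) auto
  qed
  have Z_pos: "\<And>s. s \<in> K \<Longrightarrow> Z s > 0"
  proof -
    fix s assume s: "s \<in> K"
    have "p s * (\<Sum>M\<in>N. P s M) = (\<Sum>M\<in>N. sqrt (P s M) * (p s * sqrt (P s M)))"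
      unfolding sum_distrib_left by (intro sum.cong refl) (use P_nn s in \<open>auto simp: algebra_simps\<close>)
    also have "\<dots> \<le> Z s"
      unfolding Z_def using f_ge s P_nn by (intro sum_mono mult_left_mono) auto
    finally show "Z s > 0" using P_sum s pK[OF s] by (smt (verit) mult_cancel_left1)
  qed
  have Z_eq: "\<And>s. s \<in> K \<Longrightarrow> Z s = (\<Sum>r\<in>K. p r *
      (\<Sum>d\<in>{0..D}. sqrt (q s d * q r d) * (\<Sum>k\<in>K. sqrt (z s k * z r k)) ^ d))"
  proof -
    fix s assume s: "s \<in> K"
    have sq: "sqrt (P s M * P r M) = sqrt (q s (size M) * q r (size M)) * (mult M * (\<Prod>k\<in>K. sqrt (z s k * z r k) ^ count M k))"
      if r: "r \<in> K" for r M
    proof -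
      have "P s M * P r M = (q s (size M) * q r (size M)) * (mult M)^2 * (\<Prod>k\<in>K. (z s k * z r k) ^ count M k)"
        unfolding P_eq by (simp add: power_mult_distrib prod.distrib power2_eq_square algebra_simps)
      then have "sqrt (P s M * P r M) = sqrt (q s (size M) * q r (size M)) * mult M * (\<Prod>k\<in>K. sqrt ((z s k * z r k) ^ count M k))"
        using mult_nn by (simp add: real_sqrt_mult prod_sqrt)
      then show ?thesis by (simp add: real_sqrt_power)
    qed
    have "Z s = (\<Sum>r\<in>K. p r * (\<Sum>M\<in>N. sqrt (P s M * P r M)))"
      unfolding Z_def f_def
      by (simp add: sum_distrib_left sum_distrib_right real_sqrt_mult algebra_simps) (rule sum.swap)
    also have "\<dots> = (\<Sum>r\<in>K. p r *
      (\<Sum>d\<in>{0..D}. sqrt (q s d * q r d) * (\<Sum>k\<in>K. sqrt (z s k * z r k)) ^ d))"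
    proof (intro sum.cong refl arg_cong2[where f="(*)"])
      fix r assume r: "r \<in> K"
      show "(\<Sum>M\<in>N. sqrt (P s M * P r M)) = (\<Sum>d\<in>{0..D}. sqrt (q s d * q r d) * (\<Sum>k\<in>K. sqrt (z s k * z r k)) ^ d)"
        unfolding splitN
      proof (intro sum.cong refl)
        fix d assume d: "d \<in> {0..D}"
        have "(\<Sum>M\<in>{M. set_mset M \<subseteq> K \<and> size M = d}. sqrt (P s M * P r M))
          = (\<Sum>M\<in>{M. set_mset M \<subseteq> K \<and> size M = d}. sqrt (q s d * q r d) * (mult M * (\<Prod>k\<in>K. sqrt (z s k * z r k) ^ count M k)))"
          by (intro sum.cong refl) (simp add: sq[OF r])
        also have "\<dots> = sqrt (q s d * q r d) * (\<Sum>k\<in>K. sqrt (z s k * z r k)) ^ d"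
          by (simp only: sum_distrib_left[symmetric] mult_def multinomial[OF finK])
        finally show "(\<Sum>M\<in>{M. set_mset M \<subseteq> K \<and> size M = d}. sqrt (P s M * P r M)) = sqrt (q s d * q r d) * (\<Sum>k\<in>K. sqrt (z s k * z r k)) ^ d" .
      qed
    qed
    finally show "Z s = (\<Sum>r\<in>K. p r *
      (\<Sum>d\<in>{0..D}. sqrt (q s d * q r d) * (\<Sum>k\<in>K. sqrt (z s k * z r k)) ^ d))" .
  qed
  have NIC_eq: "NIC C D p q c = - (\<Sum>s\<in>K. p s * ln (Z s))"
    unfolding NIC_def using Z_eq by (simp add: K_def z_def)
  have xl: "\<And>x. xlnx x = x * ln x" by (simp add: xlnx_def)
  have MI_eq: "MI C D p q c = - (\<Sum>s\<in>K. p s * (\<Sum>M\<in>N. P s M * (ln (Pm M) - ln (P s M))))"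
  proof -
    have "(\<Sum>M\<in>N. xlnx (Pm M)) = (\<Sum>M\<in>N. \<Sum>s\<in>K. p s * (P s M * ln (Pm M)))"
      unfolding xl by (intro sum.cong refl) (simp add: Pm_eq sum_distrib_right algebra_simps)
    also have "\<dots> = (\<Sum>s\<in>K. p s * (\<Sum>M\<in>N. P s M * ln (Pm M)))"
      by (subst sum.swap) (simp add: sum_distrib_left)
    finally have h: "(\<Sum>M\<in>N. xlnx (Pm M)) = (\<Sum>s\<in>K. p s * (\<Sum>M\<in>N. P s M * ln (Pm M)))" .
    show ?thesis unfolding MI_def N_def[symmetric] Pm_def[symmetric] P_def[symmetric] K_def[symmetric] h
      by (simp add: xl algebra_simps sum_subtractf sum_distrib_left)
  qed

  have stepA: "\<And>s. s \<in> K \<Longrightarrow> (\<Sum>M\<in>N. P s M * (ln (sqrt (P s M) * f M) - ln (P s M))) \<le> ln (Z s)"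
  proof -
    fix s assume s: "s \<in> K"
    have pt: "P s M * (ln (sqrt (P s M) * f M) - ln (P s M)) - P s M * ln (Z s)
              \<le> sqrt (P s M) * f M / Z s - P s M" if M: "M \<in> N" for M
    proof (cases "P s M = 0")
      case True then show ?thesis by simp
    next
      case False
      then have Ppos: "P s M > 0" using P_nn[OF s M] by simp
      have fpos: "f M > 0" using f_ge[OF s M] pK[OF s] Ppos
        by (smt (verit) mult_pos_pos real_sqrt_gt_zero)
      have Zp: "Z s > 0" using Z_pos[OF s] .
      have "ln (sqrt (P s M) * f M) - ln (P s M) - ln (Z s) = ln (sqrt (P s M) * f M / (P s M * Z s))"
        using Ppos fpos Zp by (simp add: ln_div ln_mult)
      also have "\<dots> \<le> sqrt (P s M) * f M / (P s M * Z s) - 1"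
        using Ppos fpos Zp by (intro ln_le_minus_one) simp
      finally have "P s M * (ln (sqrt (P s M) * f M) - ln (P s M) - ln (Z s))
          \<le> P s M * (sqrt (P s M) * f M / (P s M * Z s) - 1)"
        using Ppos by (intro mult_left_mono) auto
      also have "\<dots> = sqrt (P s M) * f M / Z s - P s M" using Ppos Zp by (simp add: field_simps)
      finally show ?thesis by (simp add: algebra_simps)
    qed
    have "(\<Sum>M\<in>N. P s M * (ln (sqrt (P s M) * f M) - ln (P s M))) - ln (Z s)
        = (\<Sum>M\<in>N. P s M * (ln (sqrt (P s M) * f M) - ln (P s M)) - P s M * ln (Z s))"
      using P_sum[OF s] by (simp add: sum_subtractf sum_distrib_right[symmetric])
    also have "\<dots> \<le> (\<Sum>M\<in>N. sqrt (P s M) * f M / Z s - P s M)"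
      by (rule sum_mono) (rule pt)
    also have "\<dots> = 0" using P_sum[OF s] Z_pos[OF s]
      by (simp add: sum_subtractf sum_divide_distrib[symmetric] Z_def[symmetric]) (simp add: Z_def)
    finally show "(\<Sum>M\<in>N. P s M * (ln (sqrt (P s M) * f M) - ln (P s M))) \<le> ln (Z s)" by simp
  qed
  have stepB: "\<And>M. M \<in> N \<Longrightarrow> (\<Sum>s\<in>K. p s * (P s M * (ln (Pm M) - ln (sqrt (P s M) * f M)))) \<le> 0"
  proof -
    fix M assume M: "M \<in> N"
    have pt: "p s * (P s M * (ln (Pm M) - ln (sqrt (P s M) * f M)))
              \<le> p s * (sqrt (P s M) * Pm M / f M - P s M)" if s: "s \<in> K" for s
    proof (cases "P s M = 0")
      case True then show ?thesis by simp
    next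
      case False
      then have Ppos: "P s M > 0" using P_nn[OF s M] by simp
      have fpos: "f M > 0" using f_ge[OF s M] pK[OF s] Ppos
        by (smt (verit) mult_pos_pos real_sqrt_gt_zero)
      have Pmpos: "Pm M > 0" using Pm_ge[OF s M] pK[OF s] Ppos
        by (smt (verit) mult_pos_pos)
      have sp: "sqrt (P s M) > 0" using Ppos by simp
      have "ln (Pm M) - ln (sqrt (P s M) * f M) = ln (Pm M / (sqrt (P s M) * f M))"
        using Pmpos fpos sp by (simp add: ln_div ln_mult)
      also have "\<dots> \<le> Pm M / (sqrt (P s M) * f M) - 1"
        using Pmpos fpos sp by (intro ln_le_minus_one) simp
      finally have "P s M * (ln (Pm M) - ln (sqrt (P s M) * f M)) \<le> P s M * (Pm M / (sqrt (P s M) * f M) - 1)"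
        using Ppos by (intro mult_left_mono) auto
      also have "\<dots> = sqrt (P s M) * Pm M / f M - P s M"
      proof -
        have "P s M = sqrt (P s M) * sqrt (P s M)" using Ppos by simp
        then show ?thesis using sp fpos by (simp add: field_simps)
      qed
      finally show ?thesis using pK[OF s] by (intro mult_left_mono) auto
    qed
    have "(\<Sum>s\<in>K. p s * (P s M * (ln (Pm M) - ln (sqrt (P s M) * f M))))
        \<le> (\<Sum>s\<in>K. p s * (sqrt (P s M) * Pm M / f M - P s M))"
      by (rule sum_mono) (rule pt)
    also have "\<dots> = f M * (Pm M / f M) - Pm M"
    proof -
      have e: "\<And>s. p s * (sqrt (P s M) * Pm M / f M - P s M) = (p s * sqrt (P s M)) * (Pm M / f M) - p s * P s M"
        by (simp add: algebra_simps)
      have hf: "(\<Sum>r\<in>K. p r * sqrt (P r M)) = f M" by (simp add: f_def)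
      show ?thesis
        by (simp only: e sum_subtractf sum_distrib_right[symmetric] hf Pm_eq[symmetric])
    qed
    also have "\<dots> = 0"
    proof (cases "f M = 0")
      case True
      have nn: "\<And>r. r \<in> K \<Longrightarrow> 0 \<le> p r * sqrt (P r M)"
          using pK P_nn M by (meson less_imp_le mult_nonneg_nonneg real_sqrt_ge_zero)
      have "\<forall>r\<in>K. p r * sqrt (P r M) = 0"
        using sum_nonneg_eq_0_iff[OF finK, of "\<lambda>r. p r * sqrt (P r M)"] nn True unfolding f_def by blast
      then have "\<forall>r\<in>K. P r M = 0" using pK by (metis less_irrefl mult_eq_0_iff real_sqrt_eq_zero_cancel_iff)
      then have "Pm M = 0" unfolding Pm_eq by simp
      then show ?thesis by simp
    next
      case False then show ?thesis by simp
    qed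
    finally show "(\<Sum>s\<in>K. p s * (P s M * (ln (Pm M) - ln (sqrt (P s M) * f M)))) \<le> 0" .
  qed
  have "(\<Sum>s\<in>K. p s * (\<Sum>M\<in>N. P s M * (ln (Pm M) - ln (P s M))))
      = (\<Sum>M\<in>N. \<Sum>s\<in>K. p s * (P s M * (ln (Pm M) - ln (sqrt (P s M) * f M))))
        + (\<Sum>s\<in>K. p s * (\<Sum>M\<in>N. P s M * (ln (sqrt (P s M) * f M) - ln (P s M))))"
  proof -
    have "(\<Sum>s\<in>K. p s * (\<Sum>M\<in>N. P s M * (ln (Pm M) - ln (P s M))))
       = (\<Sum>s\<in>K. p s * (\<Sum>M\<in>N. P s M * (ln (Pm M) - ln (sqrt (P s M) * f M))))
        + (\<Sum>s\<in>K. p s * (\<Sum>M\<in>N. P s M * (ln (sqrt (P s M) * f M) - ln (P s M))))"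
    proof -
      have e: "\<And>s M. P s M * (ln (Pm M) - ln (P s M)) = P s M * (ln (Pm M) - ln (sqrt (P s M) * f M)) + P s M * (ln (sqrt (P s M) * f M) - ln (P s M))"
        by (simp add: algebra_simps)
      show ?thesis by (simp only: e sum.distrib distrib_left)
    qed
    also have "(\<Sum>s\<in>K. p s * (\<Sum>M\<in>N. P s M * (ln (Pm M) - ln (sqrt (P s M) * f M))))
       = (\<Sum>M\<in>N. \<Sum>s\<in>K. p s * (P s M * (ln (Pm M) - ln (sqrt (P s M) * f M))))"
      by (simp add: sum_distrib_left) (rule sum.swap)
    finally show ?thesis .
  qed
  also have "\<dots> \<le> 0 + (\<Sum>s\<in>K. p s * ln (Z s))"
  proof (rule add_mono)
    show "(\<Sum>M\<in>N. \<Sum>s\<in>K. p s * (P s M * (ln (Pm M) - ln (sqrt (P s M) * f M)))) \<le> 0"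
      by (rule sum_nonpos) (rule stepB)
    show "(\<Sum>s\<in>K. p s * (\<Sum>M\<in>N. P s M * (ln (sqrt (P s M) * f M) - ln (P s M)))) \<le> (\<Sum>s\<in>K. p s * ln (Z s))"
      using stepA pK by (intro sum_mono mult_left_mono) (auto intro: less_imp_le)
  qed
  finally show ?thesis unfolding MI_eq NIC_eq by simp
qed
end
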